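(* Let $\boldsymbol{H}\in\mathbb{F}_q^{r\times m}$, $k\in\{2,\dots,r\}$, $i\in L\subseteq[m]$, and regard all entries of $\boldsymbol{H}_{[k]}^{L}$ as fixed except $h_{k,i}$. Assume $L\setminus\{i\}$ is a basis set of $\boldsymbol{H}_{[k-1]}$ and $L$ is a dependent set of $\boldsymbol{H}_{[k-1]}$. Then $|Z_{k,i}^{L}|=1$, and if $h_{k,i}\in\mathbb{F}_q\setminus Z_{k,i}^{L}$, then $L$ is a basis set of $\boldsymbol{H}_{[k]}$.
   Context: $\boldsymbol{H}_{[k]}$ denotes the first $k$ rows and $\boldsymbol{H}_{[k]}^{L}$ its columns in $L$. For a matrix with columns indexed by $[m]$: $S\subseteq[m]$ is independent if its columns are linearly independent, dependent otherwise; a basis set is a maximal independent set (an independent $S$ with $|S|$ equal to the rank of the matrix); a circuit is a dependent set all of whose proper subsets are independent. Veto set: for a circuit $C$ of $\boldsymbol{H}_{[k-1]}$ with $i\in C\subseteq L$, the column of $\boldsymbol{H}_{[k-1]}$ indexed by $i$ equals a unique combination $\sum_{j\in C\setminus\{i\}} f_j\cdot(\text{column }j)$, and its veto value is $c(C)=\sum_{j\in C\setminus\{i\}}f_j h_{k,j}$ (the unique value of $h_{k,i}$ making the columns $C$ of $\boldsymbol{H}_{[k]}$ dependent). $Z_{k,i}^{L}=\{c(L'\cup\{i\}): L'\subseteq L\setminus\{i\},\ L'\cup\{i\}\text{ a circuit of }\boldsymbol{H}_{[k-1]}\}$. *)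

theory Defs
  imports Main
begin

text \<open>A matrix H in F_q^{r x m} is represented as a function H :: nat => nat => 'a,
  with H t j the entry in row t (1 <= t <= r) and column j (1 <= j <= m);
  the field F_q is a finite field type 'a :: {field, finite}.
  H_[k] consists of rows 1..k.\<close>

definition cols_lin_indep :: "(nat \<Rightarrow> nat \<Rightarrow> 'a::field) \<Rightarrow> nat \<Rightarrow> nat set \<Rightarrow> bool" where
  "cols_lin_indep H k S \<longleftrightarrow>
     (\<forall>f. (\<forall>t\<in>{1..k}. (\<Sum>j\<in>S. f j * H t j) = 0) \<longrightarrow> (\<forall>j\<in>S. f j = 0))"

definition indep_set :: "(nat \<Rightarrow> nat \<Rightarrow> 'a::field) \<Rightarrow> nat \<Rightarrow> nat \<Rightarrow> nat set \<Rightarrow> bool" where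
  "indep_set H k m S \<longleftrightarrow> S \<subseteq> {1..m} \<and> cols_lin_indep H k S"

definition dep_set :: "(nat \<Rightarrow> nat \<Rightarrow> 'a::field) \<Rightarrow> nat \<Rightarrow> nat \<Rightarrow> nat set \<Rightarrow> bool" where
  "dep_set H k m S \<longleftrightarrow> S \<subseteq> {1..m} \<and> \<not> cols_lin_indep H k S"

definition basis_set :: "(nat \<Rightarrow> nat \<Rightarrow> 'a::field) \<Rightarrow> nat \<Rightarrow> nat \<Rightarrow> nat set \<Rightarrow> bool" where
  "basis_set H k m S \<longleftrightarrow> indep_set H k m S \<and>
     (\<forall>T. S \<subset> T \<and> T \<subseteq> {1..m} \<longrightarrow> \<not> indep_set H k m T)"

definition circuit :: "(nat \<Rightarrow> nat \<Rightarrow> 'a::field) \<Rightarrow> nat \<Rightarrow> nat \<Rightarrow> nat set \<Rightarrow> bool" where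
  "circuit H k m C \<longleftrightarrow> dep_set H k m C \<and> (\<forall>D. D \<subset> C \<longrightarrow> indep_set H k m D)"

text \<open>Veto value c(C) for a circuit C of H_[k-1] containing i: writing column i of
  H_[k-1] as the (unique) combination sum_{j in C-{i}} f_j (column j), it is
  sum_{j in C-{i}} f_j h_{k,j}.\<close>
definition veto :: "(nat \<Rightarrow> nat \<Rightarrow> 'a::field) \<Rightarrow> nat \<Rightarrow> nat \<Rightarrow> nat set \<Rightarrow> 'a" where
  "veto H k i C = (THE v. \<exists>f. (\<forall>t\<in>{1..k-1}. H t i = (\<Sum>j\<in>C-{i}. f j * H t j))
                              \<and> v = (\<Sum>j\<in>C-{i}. f j * H k j))"

definition veto_set :: "(nat \<Rightarrow> nat \<Rightarrow> 'a::field) \<Rightarrow> nat \<Rightarrow> nat \<Rightarrow> nat \<Rightarrow> nat set \<Rightarrow> 'a set" where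
  "veto_set H m k i L = {veto H k i (L' \<union> {i}) | L'.
      L' \<subseteq> L - {i} \<and> circuit H (k-1) m (L' \<union> {i})}"

end

theory Submission
  imports Defs
begin

lemma sum_ext0:
  fixes f x :: "nat \<Rightarrow> 'a::field"
  assumes "finite B" "C \<subseteq> B"
  shows "(\<Sum>j\<in>C. f j * x j) = (\<Sum>j\<in>B. (if j\<in>C then f j else 0) * x j)"
proof -
  have "(\<Sum>j\<in>B. (if j\<in>C then f j else 0) * x j) = (\<Sum>j\<in>B. if j \<in> C then f j * x j else 0)"
    by (rule sum.cong) auto
  also have "\<dots> = (\<Sum>j\<in>B \<inter> C. f j * x j)"
    using assms(1) by (simp add: sum.inter_restrict)
  also have "B \<inter> C = C" using assms(2) by blast
  finally show ?thesis by simp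
qed

lemma indep_unique:
  assumes "cols_lin_indep H n B" "finite B"
    "\<forall>t\<in>{1..n}. (\<Sum>j\<in>B. f j * H t j) = (\<Sum>j\<in>B. g j * H t j)" "j \<in> B"
  shows "f j = g j"
proof -
  have "\<forall>t\<in>{1..n}. (\<Sum>j\<in>B. (f j - g j) * H t j) = 0"
    using assms(3) by (simp add: left_diff_distrib sum_subtractf)
  then have "\<forall>j\<in>B. f j - g j = 0" using spec[OF assms(1)[unfolded cols_lin_indep_def], of "\<lambda>j. f j - g j"] by blast
  then show ?thesis using assms(4) by simp
qed

lemma indep_subset:
  assumes "cols_lin_indep H n S" "T \<subseteq> S" "finite S"
  shows "cols_lin_indep H n T"
  unfolding cols_lin_indep_def
proof (intro allI impI ballI)
  fix f j assume f: "\<forall>t\<in>{1..n}. (\<Sum>j\<in>T. f j * H t j) = 0" and j: "j \<in> T"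
  define f' where "f' j = (if j \<in> T then f j else 0)" for j
  have "\<forall>t\<in>{1..n}. (\<Sum>j\<in>S. f' j * H t j) = 0"
    using f sum_ext0[OF assms(3) assms(2)] unfolding f'_def by metis
  then have "\<forall>j\<in>S. f' j = 0" using assms(1) unfolding cols_lin_indep_def by blast
  then have "f' j = 0" using j assms(2) by blast
  then show "f j = 0" using j unfolding f'_def by simp
qed

lemma solve_lin:
  fixes x y :: "'a::field"
  assumes "x * y + (\<Sum>j\<in>B. f j * h j) = 0" "x \<noteq> 0"
  shows "y = (\<Sum>j\<in>B. (- f j / x) * h j)"
proof -
  have "(\<Sum>j\<in>B. (- f j / x) * h j) = - (\<Sum>j\<in>B. f j * h j) / x"
    by (simp add: sum_divide_distrib sum_negf[symmetric])
  also have "\<dots> = y" using assms by (simp add: field_simps add_eq_0_iff)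
  finally show ?thesis by simp
qed

lemma dep_rep:
  assumes "finite C" "\<not> cols_lin_indep H n C" "cols_lin_indep H n (C-{i})"
  shows "i \<in> C \<and> (\<exists>f. \<forall>t\<in>{1..n}. H t i = (\<Sum>j\<in>C-{i}. f j * H t j))"
proof -
  from assms(2) obtain g j0 where g: "\<forall>t\<in>{1..n}. (\<Sum>j\<in>C. g j * H t j) = 0"
    and j0: "j0\<in>C" "g j0 \<noteq> 0" unfolding cols_lin_indep_def by blast
  have gi: "i \<in> C \<and> g i \<noteq> 0"
  proof (rule ccontr)
    assume nc: "\<not> (i \<in> C \<and> g i \<noteq> 0)"
    have "\<forall>t\<in>{1..n}. (\<Sum>j\<in>C-{i}. g j * H t j) = 0"
    proof
      fix t assume t: "t \<in> {1..n}"
      show "(\<Sum>j\<in>C-{i}. g j * H t j) = 0"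
      proof (cases "i \<in> C")
        case True
        then have "(\<Sum>j\<in>C. g j * H t j) = g i * H t i + (\<Sum>j\<in>C-{i}. g j * H t j)"
          using assms(1) by (meson sum.remove)
        then show ?thesis using g t nc True by simp
      next
        case False then show ?thesis using g t by simp
      qed
    qed
    hence "\<forall>j\<in>C-{i}. g j = 0" using assms(3) unfolding cols_lin_indep_def by blast
    with j0 nc show False by (cases "j0 = i") auto
  qed
  have "\<forall>t\<in>{1..n}. H t i = (\<Sum>j\<in>C-{i}. (- g j / g i) * H t j)"
  proof
    fix t assume t: "t \<in> {1..n}"
    have "(\<Sum>j\<in>C. g j * H t j) = g i * H t i + (\<Sum>j\<in>C-{i}. g j * H t j)"
      using assms(1) gi by (meson sum.remove)
    then show "H t i = (\<Sum>j\<in>C-{i}. (- g j / g i) * H t j)"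
      using g t gi solve_lin by metis
  qed
  then show ?thesis using gi by (intro conjI exI[of _ "\<lambda>j. - g j / g i"]) auto
qed

lemma min_dep:
  assumes "finite L" "\<not> P L"
  shows "\<exists>C\<subseteq>L. \<not> P C \<and> (\<forall>D\<subset>C. P D)"
  using assms
proof (induction L rule: finite_psubset_induct)
  case (psubset A)
  show ?case
  proof (cases "\<forall>D\<subset>A. P D")
    case True then show ?thesis using psubset by blast
  next
    case False
    then obtain D where D: "D \<subset> A" "\<not> P D" by blast
    then have "finite D" using psubset(1) finite_subset by blast
    then obtain C where "C \<subseteq> D" "\<not> P C" "\<forall>D\<subset>C. P D" using psubset(2)[OF D(1)] D(2) by blast
    then show ?thesis using D(1) by blast
  qed
qed

lemma nz_dep:
  assumes "finite T" "S \<subseteq> T" "\<forall>t\<in>{1..k}. (\<Sum>j\<in>S. u j * H t j) = 0" "l \<in> S" "u l \<noteq> 0"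
  shows "\<not> cols_lin_indep H k T"
proof
  assume ind: "cols_lin_indep H k T"
  define u' where "u' j = (if j \<in> S then u j else 0)" for j
  have "\<forall>t\<in>{1..k}. (\<Sum>j\<in>T. u' j * H t j) = 0"
    using assms(3) sum_ext0[OF assms(1) assms(2)] unfolding u'_def by metis
  then have "\<forall>j\<in>T. u' j = 0" using ind unfolding cols_lin_indep_def by blast
  then have "u' l = 0" using assms(2,4) by blast
  then show False using assms(4,5) unfolding u'_def by simp
qed

theorem proposition4:
  fixes H :: "nat \<Rightarrow> nat \<Rightarrow> 'a::{field,finite}"
    and r m k i :: nat and L :: "nat set"
  assumes "2 \<le> k" and "k \<le> r"
    and "i \<in> L" and "L \<subseteq> {1..m}"
    and "basis_set H (k-1) m (L - {i})"
    and "dep_set H (k-1) m L"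
  shows "card (veto_set H m k i L) = 1 \<and>
         (H k i \<notin> veto_set H m k i L \<longrightarrow> basis_set H k m L)"
proof -
  define n where "n = k - 1"
  have kn: "k = Suc n" using assms(1) n_def by auto
  have rows: "{1..k} = insert k {1..n}" using kn assms(1) by auto
  define B where "B = L - {i}"
  have finL: "finite L" using assms(4) finite_subset by blast
  have finB: "finite B" using finL B_def by simp
  have iB: "i \<notin> B" using B_def by simp
  have LB: "L = insert i B" using B_def assms(3) by auto
  have Bind: "cols_lin_indep H n B" using assms(5) unfolding basis_set_def indep_set_def n_def B_def by blast
  have Ldep: "\<not> cols_lin_indep H n L" using assms(6) unfolding dep_set_def n_def by blast
  obtain a where a: "\<forall>t\<in>{1..n}. H t i = (\<Sum>j\<in>B. a j * H t j)"
    using dep_rep[OF finL Ldep] Bind B_def by auto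
  define v0 where "v0 = (\<Sum>j\<in>B. a j * H k j)"
  have veto_eq: "veto H k i (L' \<union> {i}) = v0" if L': "L' \<subseteq> B" "circuit H n m (L' \<union> {i})" for L'
  proof -
    let ?C = "L' \<union> {i}"
    have Ci: "?C - {i} = L'" using iB L' by auto
    have finC: "finite ?C" using finB L' finite_subset by auto
    have dep: "\<not> cols_lin_indep H n ?C" using L'(2) unfolding circuit_def dep_set_def by blast
    have "L' \<subset> ?C" using iB L' by auto
    then have ind: "cols_lin_indep H n L'" using L'(2) unfolding circuit_def indep_set_def by blast
    have "i \<in> ?C \<and> (\<exists>f. \<forall>t\<in>{1..n}. H t i = (\<Sum>j\<in>?C-{i}. f j * H t j))"
      by (rule dep_rep[OF finC dep]) (simp only: Ci ind)
    then obtain f where f: "\<forall>t\<in>{1..n}. H t i = (\<Sum>j\<in>L'. f j * H t j)"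
      unfolding Ci by blast
    have uniq: "(\<Sum>j\<in>L'. g j * H k j) = v0" if g: "\<forall>t\<in>{1..n}. H t i = (\<Sum>j\<in>L'. g j * H t j)" for g
    proof -
      define g' where "g' j = (if j \<in> L' then g j else 0)" for j
      have ext: "\<And>t. (\<Sum>j\<in>L'. g j * H t j) = (\<Sum>j\<in>B. g' j * H t j)"
        using sum_ext0[OF finB L'(1)] unfolding g'_def by metis
      have "\<forall>t\<in>{1..n}. (\<Sum>j\<in>B. g' j * H t j) = (\<Sum>j\<in>B. a j * H t j)"
        using g a ext by metis
      then have "\<forall>j\<in>B. g' j = a j" using indep_unique[OF Bind finB] by blast
      then show ?thesis unfolding v0_def ext by (auto intro: sum.cong)
    qed
    have nk: "k - 1 = n" using n_def by simp
    show ?thesis unfolding veto_def nk Ci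
    proof (rule the_equality)
      show "\<exists>f. (\<forall>t\<in>{1..n}. H t i = (\<Sum>j\<in>L'. f j * H t j)) \<and> v0 = (\<Sum>j\<in>L'. f j * H k j)"
        using f uniq by metis
    next
      fix v assume "\<exists>f. (\<forall>t\<in>{1..n}. H t i = (\<Sum>j\<in>L'. f j * H t j)) \<and> v = (\<Sum>j\<in>L'. f j * H k j)"
      then show "v = v0" using uniq by metis
    qed
  qed
  obtain C where C: "C \<subseteq> L" "\<not> cols_lin_indep H n C" "\<forall>D\<subset>C. cols_lin_indep H n D"
    using min_dep[OF finL, of "cols_lin_indep H n"] Ldep by blast
  have iC: "i \<in> C"
  proof (rule ccontr)
    assume "i \<notin> C"
    then have "C \<subseteq> B" using C(1) B_def by auto
    then show False using indep_subset[OF Bind _ finB] C(2) by blast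
  qed
  have CC: "(C - {i}) \<union> {i} = C" using iC by auto
  have circ: "circuit H n m ((C - {i}) \<union> {i})"
    unfolding CC circuit_def dep_set_def indep_set_def using C assms(4) by blast
  have vs: "veto_set H m k i L = {v0}"
  proof
    show "veto_set H m k i L \<subseteq> {v0}"
      unfolding veto_set_def n_def[symmetric] B_def[symmetric] using veto_eq by auto
    have "C - {i} \<subseteq> B" using C(1) B_def by auto
    then show "{v0} \<subseteq> veto_set H m k i L"
      unfolding veto_set_def n_def[symmetric] B_def[symmetric] using veto_eq circ by blast
  qed
  have part2: "basis_set H k m L" if hne: "H k i \<noteq> v0"
  proof -
    have split: "\<And>f t. (\<Sum>j\<in>L. f j * H t j) = f i * H t i + (\<Sum>j\<in>B. f j * H t j)"
      unfolding LB using finB iB by simp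
    have indL: "cols_lin_indep H k L"
      unfolding cols_lin_indep_def
    proof (intro allI impI)
      fix f assume f: "\<forall>t\<in>{1..k}. (\<Sum>j\<in>L. f j * H t j) = 0"
      show "\<forall>j\<in>L. f j = 0"
      proof (cases "f i = 0")
        case True
        then have "\<forall>t\<in>{1..n}. (\<Sum>j\<in>B. f j * H t j) = 0" using f split rows by simp
        then have "\<forall>j\<in>B. f j = 0" using Bind unfolding cols_lin_indep_def by blast
        then show ?thesis using True LB by auto
      next
        case False
        define c where "c j = - f j / f i" for j
        have rep: "\<forall>t\<in>{1..k}. H t i = (\<Sum>j\<in>B. c j * H t j)"
          unfolding c_def using f split False solve_lin by metis
        then have "\<forall>t\<in>{1..n}. (\<Sum>j\<in>B. c j * H t j) = (\<Sum>j\<in>B. a j * H t j)"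
          using a rows by auto
        then have "\<forall>j\<in>B. c j = a j" using indep_unique[OF Bind finB] by blast
        then have "H k i = v0" using rep rows unfolding v0_def by (auto intro: sum.cong)
        then show ?thesis using hne by simp
      qed
    qed
    have maxL: "\<not> indep_set H k m T" if T: "L \<subset> T" "T \<subseteq> {1..m}" for T
    proof -
      have finT: "finite T" using T(2) finite_subset by blast
      obtain j where j: "j \<in> T" "j \<notin> L" using T(1) by blast
      have jB: "j \<notin> B" "j \<noteq> i" using j LB by auto
      have "B \<subset> insert j B" "insert j B \<subseteq> {1..m}" using jB j T LB by auto
      then have "\<not> indep_set H n m (insert j B)" using assms(5) unfolding basis_set_def n_def B_def by blast
      then have dj: "\<not> cols_lin_indep H n (insert j B)"
        using \<open>insert j B \<subseteq> {1..m}\<close> unfolding indep_set_def by blast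
      have "insert j B - {j} = B" using jB by auto
      then obtain b where b: "\<forall>t\<in>{1..n}. H t j = (\<Sum>l\<in>B. b l * H t l)"
        using dep_rep[OF _ dj, of j] finB Bind by auto
      define \<alpha> where "\<alpha> = H k i - (\<Sum>l\<in>B. a l * H k l)"
      define \<beta> where "\<beta> = H k j - (\<Sum>l\<in>B. b l * H k l)"
      have "\<not> cols_lin_indep H k T"
      proof (cases "\<alpha> = 0")
        case True
        define u where "u l = (if l = i then 1 else - a l)" for l
        have "\<forall>t\<in>{1..k}. (\<Sum>l\<in>L. u l * H t l) = 0"
        proof
          fix t assume t: "t \<in> {1..k}"
          have "(\<Sum>l\<in>L. u l * H t l) = H t i + (\<Sum>l\<in>B. - a l * H t l)"
            unfolding split u_def using iB by (auto intro!: sum.cong)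
          also have "\<dots> = H t i - (\<Sum>l\<in>B. a l * H t l)" by (simp add: sum_negf)
          also have "\<dots> = 0" using t rows a True \<alpha>_def by auto
          finally show "(\<Sum>l\<in>L. u l * H t l) = 0" .
        qed
        moreover have "L \<subseteq> T" using T(1) by blast
        ultimately show ?thesis using nz_dep[OF finT, where u=u and S=L and l=i and k=k and H=H] assms(3) unfolding u_def by auto
      next
        case False
        define u where "u l = (if l = i then \<beta> else if l = j then - \<alpha> else (- \<beta> * a l + \<alpha> * b l))" for l
        have S: "insert i (insert j B) \<subseteq> T" using T j LB by auto
        have "\<forall>t\<in>{1..k}. (\<Sum>l\<in>insert i (insert j B). u l * H t l) = 0"
        proof
          fix t assume t: "t \<in> {1..k}"
          have "(\<Sum>l\<in>insert i (insert j B). u l * H t l)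
              = \<beta> * H t i + (- \<alpha>) * H t j + (\<Sum>l\<in>B. (- \<beta> * a l + \<alpha> * b l) * H t l)"
            using finB iB jB unfolding u_def by (auto intro!: sum.cong)
          also have "(\<Sum>l\<in>B. (- \<beta> * a l + \<alpha> * b l) * H t l)
              = - \<beta> * (\<Sum>l\<in>B. a l * H t l) + \<alpha> * (\<Sum>l\<in>B. b l * H t l)"
          proof -
            have "(\<Sum>l\<in>B. (- \<beta> * a l + \<alpha> * b l) * H t l)
                = (\<Sum>l\<in>B. (- \<beta>) * (a l * H t l) + \<alpha> * (b l * H t l))"
              by (rule sum.cong) (simp_all add: algebra_simps)
            also have "\<dots> = (\<Sum>l\<in>B. (- \<beta>) * (a l * H t l)) + (\<Sum>l\<in>B. \<alpha> * (b l * H t l))"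
              by (rule sum.distrib)
            also have "\<dots> = - \<beta> * (\<Sum>l\<in>B. a l * H t l) + \<alpha> * (\<Sum>l\<in>B. b l * H t l)"
              by (simp only: sum_distrib_left)
            finally show ?thesis .
          qed
          finally have e: "(\<Sum>l\<in>insert i (insert j B). u l * H t l)
              = \<beta> * (H t i - (\<Sum>l\<in>B. a l * H t l)) - \<alpha> * (H t j - (\<Sum>l\<in>B. b l * H t l))"
            by (simp add: algebra_simps)
          show "(\<Sum>l\<in>insert i (insert j B). u l * H t l) = 0"
          proof (cases "t = k")
            case True then show ?thesis unfolding e \<alpha>_def \<beta>_def by (simp add: algebra_simps)
          next
            case False then have "t \<in> {1..n}" using t rows by auto
            then show ?thesis unfolding e using a b by simp
          qed
        qed
        then show ?thesis using nz_dep[OF finT S, where u=u and l=j and k=k and H=H] jB False unfolding u_def by auto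
      qed
      then show ?thesis unfolding indep_set_def by blast
    qed
    show ?thesis unfolding basis_set_def indep_set_def using indL assms(4) maxL
      unfolding indep_set_def by blast
  qed
  show ?thesis using vs part2 by simp
qed

end
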